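(* Let $\mu\in(0,1]$, let $X\subset\mathbb{R}^d$ be a complementary regular set with $\operatorname{reach}_\mu(X)>0$, and let $x\in\partial X$. Then $\operatorname{Tan}(\mathcal{C}X,x)$ contains a closed ball of radius $\mu$ centered at some unit vector.
   Context: $d_A(y)=\inf_{a\in A}\|y-a\|$; $\mathcal{C}A:=\overline{\mathbb{R}^d\setminus A}$; $\partial A=\overline A\setminus\operatorname{int}A$. Clarke gradient $\partial\phi(y)$: convex hull of limits $\lim_i\nabla\phi(y_i)$, $y_i\to y$, $\phi$ differentiable at $y_i$; $\Delta(B)=\inf_{b\in B}\|b\|$. Reach of closed $A$: supremum of $t\ge0$ such that every $y$ with $d_A(y)<t$ has a unique nearest point in $A$. $\operatorname{reach}_\mu(A)=\sup\{s:\Delta(\partial d_A(y))\ge\mu\text{ for all }y\text{ with }0<d_A(y)\le s\}$. Complementary regular: compact $X$ with $\overline{\operatorname{int}X}=X$, $\operatorname{reach}_{\mu'}(X)>0$ for some $\mu'\in(0,1]$, $\operatorname{reach}(\mathcal{C}X)>0$. Tangent cone $\operatorname{Tan}(A,x)$: cone generated by limits $(x_n-x)/\|x_n-x\|$, $x_n\in A\setminus\{x\}$, $x_n\to x$. *)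

theory Defs
  imports "HOL-Analysis.Analysis"
begin

text \<open>Distance function d_A(y) = inf over a in A of norm (y - a): the library's infdist.\<close>

definition ccompl :: "'a::euclidean_space set \<Rightarrow> 'a set" where
  "ccompl A = closure (UNIV - A)"

definition grad_limits :: "('a::euclidean_space \<Rightarrow> real) \<Rightarrow> 'a \<Rightarrow> 'a set" where
  "grad_limits phi y = {v. \<exists>ys g. ys \<longlonglongrightarrow> y \<and>
      (\<forall>i. (phi has_derivative (\<lambda>h. g i \<bullet> h)) (at (ys i))) \<and> g \<longlonglongrightarrow> v}"

definition clarke_grad :: "('a::euclidean_space \<Rightarrow> real) \<Rightarrow> 'a \<Rightarrow> 'a set" where
  "clarke_grad phi y = convex hull (grad_limits phi y)"

definition Delta :: "'a::euclidean_space set \<Rightarrow> real" where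
  "Delta B = Inf (norm ` B)"

text \<open>Reach (valued in extended reals, as it may be infinite).\<close>
definition reach :: "'a::euclidean_space set \<Rightarrow> ereal" where
  "reach A = Sup (ereal ` {t. t \<ge> 0 \<and>
      (\<forall>y. infdist y A < t \<longrightarrow> (\<exists>!a. a \<in> A \<and> dist y a = infdist y A))})"

definition reach_mu :: "real \<Rightarrow> 'a::euclidean_space set \<Rightarrow> ereal" where
  "reach_mu mu A = Sup (ereal ` {s. \<forall>y. 0 < infdist y A \<and> infdist y A \<le> s \<longrightarrow>
      Delta (clarke_grad (\<lambda>z. infdist z A) y) \<ge> mu})"

definition complementary_regular :: "'a::euclidean_space set \<Rightarrow> bool" where
  "complementary_regular X \<longleftrightarrow> compact X \<and> closure (interior X) = X \<and>
     (\<exists>mu'. 0 < mu' \<and> mu' \<le> 1 \<and> reach_mu mu' X > 0) \<and> reach (ccompl X) > 0"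

definition tan_dirs :: "'a::euclidean_space set \<Rightarrow> 'a \<Rightarrow> 'a set" where
  "tan_dirs A x = {v. \<exists>xn. (\<forall>n. xn n \<in> A - {x}) \<and> xn \<longlonglongrightarrow> x \<and>
      (\<lambda>n. (xn n - x) /\<^sub>R norm (xn n - x)) \<longlonglongrightarrow> v}"

definition Tan :: "'a::euclidean_space set \<Rightarrow> 'a \<Rightarrow> 'a set" where
  "Tan A x = {c *\<^sub>R v | c v. 0 \<le> c \<and> v \<in> tan_dirs A x}"

end

theory Submission
  imports Defs
begin

lemma deriv_perturb:
  fixes f g :: "'a::euclidean_space \<Rightarrow> real"
  assumes gd: "(g has_derivative D) (at z)" and fz: "f z = g z" and r: "0 < r" and C: "0 \<le> C"
    and bnd: "\<And>q. norm (q - z) < r \<Longrightarrow> \<bar>f q - g q\<bar> \<le> C * (norm (q - z))^2"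
  shows "(f has_derivative D) (at z)"
proof -
  from gd have bl: "bounded_linear D" and
    gl: "\<forall>e>0. \<exists>d>0. \<forall>x'. 0 < norm (x' - z) \<and> norm (x' - z) < d \<longrightarrow>
        norm (g x' - g z - D(x' - z)) / norm (x' - z) < e"
    unfolding has_derivative_at' by auto
  show ?thesis unfolding has_derivative_at'
  proof (intro conjI bl allI impI)
    fix e :: real assume e: "e > 0"
    obtain d1 where d1: "d1 > 0" and hd1: "\<And>x'. 0 < norm (x' - z) \<Longrightarrow> norm (x' - z) < d1 \<Longrightarrow>
        norm (g x' - g z - D(x' - z)) / norm (x' - z) < e/2"
      using gl e by (meson half_gt_zero)
    define d where "d = min d1 (min r (e / (2 * (C + 1))))"
    have dpos: "d > 0" using d1 r e C by (simp add: d_def)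
    show "\<exists>d>0. \<forall>x'. 0 < norm (x' - z) \<and> norm (x' - z) < d \<longrightarrow>
        norm (f x' - f z - D(x' - z)) / norm (x' - z) < e"
    proof (intro exI[of _ d] conjI dpos allI impI)
      fix x' assume h: "0 < norm (x' - z) \<and> norm (x' - z) < d"
      define n where "n = norm (x' - z)"
      have n0: "0 < n" using h n_def by auto
      have A: "\<bar>g x' - g z - D(x' - z)\<bar> < e/2 * n"
        using hd1[of x'] h d_def n0 unfolding n_def by (simp add: divide_less_eq)
      have B: "\<bar>f x' - g x'\<bar> \<le> C * n^2" using bnd[of x'] h d_def n_def by simp
      have nle: "n < e / (2 * (C + 1))" using h d_def n_def by simp
      have "C * n^2 \<le> (C+1) * n * n" using C n0 by (simp add: power2_eq_square mult_right_mono)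
      also have "\<dots> \<le> e/2 * n"
      proof -
        have "(C+1) * n \<le> e/2" using nle C by (simp add: field_simps)
        then show ?thesis using n0 by (simp add: mult_right_mono)
      qed
      finally have B': "\<bar>f x' - g x'\<bar> \<le> e/2 * n" using B by linarith
      have "\<bar>f x' - f z - D(x' - z)\<bar> < e * n" using A B' fz by linarith
      then show "norm (f x' - f z - D(x' - z)) / norm (x' - z) < e"
        using n0 by (simp add: n_def divide_less_eq)
    qed
  qed
qed

lemma key_ineq:
  fixes u b :: "'a::euclidean_space"
  assumes "norm (u - b) \<ge> norm u" "0 \<le> l" "l \<le> 1"
  shows "(norm (l *\<^sub>R u - b))^2 \<ge> (norm (l *\<^sub>R u))^2 + (1 - l) * (norm b)^2"
proof -
  have "(norm (u - b))^2 \<ge> (norm u)^2" using assms(1) by (simp add: power_mono)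
  then have h: "2 * (u \<bullet> b) \<le> b \<bullet> b"
    by (simp add: power2_norm_eq_inner inner_diff_left inner_diff_right inner_commute)
  have "(norm (l *\<^sub>R u - b))^2 = l*l*(u \<bullet> u) - 2*l*(u \<bullet> b) + b \<bullet> b"
    by (simp add: power2_norm_eq_inner inner_diff_left inner_diff_right inner_commute algebra_simps)
  moreover have "(norm (l *\<^sub>R u))^2 + (1 - l) * (norm b)^2 = l*l*(u \<bullet> u) + (1-l) * (b \<bullet> b)"
    by (simp add: power2_norm_eq_inner[symmetric] power_mult_distrib algebra_simps power2_eq_square dot_square_norm)
  moreover have "l * (2 * (u \<bullet> b)) \<le> l * (b \<bullet> b)" using h assms(2) by (rule mult_left_mono)
  ultimately show ?thesis by (simp add: algebra_simps)
qed

lemma sq_ineq_aux: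
  fixes B H l :: real
  assumes "0 < l" "l < 1" "0 \<le> B" "0 \<le> H"
  shows "(1 - l) * B^2 - 2 * B * H \<ge> -((H^2) / (1 - l))"
proof -
  have "0 \<le> ((1-l) * B - H)^2 / (1 - l)" using assms by simp
  also have "((1-l) * B - H)^2 / (1 - l) = (1 - l) * B^2 - 2 * B * H + H^2 / (1 - l)"
    using assms by (simp add: field_simps power2_eq_square)
  finally show ?thesis by simp
qed


lemma nsq: "(norm ((u::'a::real_inner) + v))^2 = (norm u)^2 + 2 * (u \<bullet> v) + (norm v)^2"
  by (simp add: power2_norm_eq_inner inner_add_left inner_add_right inner_commute)

lemma seg_deriv:
  fixes X :: "'a::euclidean_space set"
  assumes cX: "closed X" and aX: "a \<in> X" and dpos: "infdist y X > 0"
    and ya: "dist y a = infdist y X" and l0: "0 < l" and l1: "l < 1"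
  shows "((\<lambda>q. infdist q X) has_derivative (\<lambda>h. ((y - a) /\<^sub>R infdist y X) \<bullet> h))
           (at (a + l *\<^sub>R (y - a)))"
proof -
  define z where "z = a + l *\<^sub>R (y - a)"
  define d where "d = infdist y X"
  have Xne: "X \<noteq> {}" using aX by auto
  have d0: "d > 0" using dpos d_def by simp
  have nya: "norm (y - a) = d" using ya d_def by (simp add: dist_norm)
  have key: "(norm (z - a'))^2 \<ge> (norm (z - a))^2 + (1 - l) * (norm (a' - a))^2" if "a' \<in> X" for a'
  proof -
    have "norm ((y - a) - (a' - a)) \<ge> norm (y - a)"
      using infdist_le[OF that, of y] nya d_def by (simp add: dist_norm)
    from key_ineq[OF this] l0 l1
    have "(norm (l *\<^sub>R (y - a) - (a' - a)))^2 \<ge> (norm (l *\<^sub>R (y - a)))^2 + (1 - l) * (norm (a' - a))^2"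
      by simp
    moreover have "l *\<^sub>R (y - a) - (a' - a) = z - a'" "l *\<^sub>R (y - a) = z - a"
      by (simp_all add: z_def algebra_simps)
    ultimately show ?thesis by simp
  qed
  have nza: "norm (z - a) = l * d" using nya l0 by (simp add: z_def)
  have fz: "infdist z X = norm (z - a)"
  proof -
    obtain a' where a': "a' \<in> X" "infdist z X = dist z a'" using infdist_attains_inf[OF cX Xne] by blast
    have "(norm (z - a'))^2 \<ge> (norm (z - a))^2" using key[OF a'(1)] l1 by (smt (verit) mult_nonneg_nonneg zero_le_power2)
    then have "norm (z - a') \<ge> norm (z - a)" using power2_le_imp_le by fastforce
    moreover have "infdist z X \<le> norm (z - a)" using infdist_le[OF aX, of z] by (simp add: dist_norm)
    ultimately show ?thesis using a' by (simp add: dist_norm)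
  qed
  have gd: "((\<lambda>q. norm (q - a)) has_derivative (\<lambda>h. h \<bullet> sgn (z - a))) (at z)"
  proof -
    have "z - a \<noteq> 0" using nza l0 d0 by auto
    from has_derivative_compose[OF has_derivative_diff[OF has_derivative_ident has_derivative_const[of a]]
        has_derivative_norm[OF this]]
    show ?thesis by simp
  qed
  have sg: "(\<lambda>h. h \<bullet> sgn (z - a)) = (\<lambda>h. ((y - a) /\<^sub>R d) \<bullet> h)"
    using nza nya l0 d0 by (auto simp: sgn_div_norm z_def inner_commute)
  define C where "C = 2 / ((1 - l) * (l * d))"
  have C0: "0 \<le> C" using l0 l1 d0 by (simp add: C_def)
  have bnd: "\<bar>infdist q X - norm (q - a)\<bar> \<le> C * (norm (q - z))^2" if qz: "norm (q - z) < l * d / 2" for q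
  proof -
    obtain a' where a': "a' \<in> X" "infdist q X = dist q a'" using infdist_attains_inf[OF cX Xne] by blast
    define F where "F = norm (q - a')"
    define G where "G = norm (q - a)"
    define H where "H = norm (q - z)"
    define B where "B = norm (a' - a)"
    have FG: "F \<le> G" using infdist_le[OF aX, of q] a' by (simp add: F_def G_def dist_norm)
    have e1: "F^2 = (norm (z - a'))^2 + 2 * ((z - a') \<bullet> (q - z)) + H^2"
    proof -
      have eq: "q - a' = (z - a') + (q - z)" by simp
      show ?thesis unfolding F_def H_def
        using nsq[of "z - a'" "q - z"] by simp
    qed
    have e2: "G^2 = (norm (z - a))^2 + 2 * ((z - a) \<bullet> (q - z)) + H^2"
    proof -
      have eq: "q - a = (z - a) + (q - z)" by simp
      show ?thesis unfolding G_def H_def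
        using nsq[of "z - a" "q - z"] by simp
    qed
    have e3: "(z - a') \<bullet> (q - z) = (z - a) \<bullet> (q - z) - (a' - a) \<bullet> (q - z)"
      by (simp add: inner_diff_left)
    have cs: "(a' - a) \<bullet> (q - z) \<le> B * H" unfolding B_def H_def by (rule norm_cauchy_schwarz)
    have aux: "(1 - l) * B^2 - 2 * B * H \<ge> -((H^2) / (1 - l))"
      using sq_ineq_aux[OF l0 l1, of B H] by (simp add: B_def H_def)
    have "F^2 \<ge> G^2 - H^2 / (1 - l)"
      using e1 e2 e3 cs aux key[OF a'(1)] unfolding B_def by linarith
    then have diff: "G^2 - F^2 \<le> H^2 / (1 - l)" by simp
    have Gl: "G \<ge> l * d / 2"
    proof -
      have "norm (z - a) \<le> norm (q - a) + norm (q - z)" by (metis norm_diff_triangle_ineq add.commute diff_add_cancel norm_minus_commute norm_triangle_ineq4 order_trans add_le_cancel_left diff_diff_eq2 dual_order.refl)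
      then show ?thesis using nza qz unfolding G_def by linarith
    qed
    have F0: "F \<ge> 0" by (simp add: F_def)
    have GF0: "G + F > 0" using Gl F0 l0 d0 by (smt (verit) mult_pos_pos half_gt_zero)
    have "G - F = (G^2 - F^2) / (G + F)" using GF0
      by (simp add: field_simps power2_eq_square)
    also have "\<dots> \<le> (H^2 / (1 - l)) / (G + F)"
      using diff GF0 by (intro divide_right_mono) auto
    also have "\<dots> \<le> (H^2 / (1 - l)) / (l * d / 2)"
      using Gl F0 l0 d0 l1 GF0 by (intro divide_left_mono) (auto intro!: mult_pos_pos)
    also have "\<dots> = C * H^2" by (simp add: C_def field_simps)
    finally have "G - F \<le> C * H^2" .
    then show ?thesis using FG a' unfolding F_def G_def H_def by (simp add: dist_norm)
  qed
  have "((\<lambda>q. infdist q X) has_derivative (\<lambda>h. h \<bullet> sgn (z - a))) (at z)"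
    by (rule deriv_perturb[where r="l * d / 2", OF gd fz _ C0 bnd]) (use l0 d0 in auto)
  then show ?thesis using sg d_def z_def by simp
qed


lemma grad_in:
  fixes X :: "'a::euclidean_space set"
  assumes cX: "closed X" and aX: "a \<in> X" and dpos: "infdist y X > 0"
    and ya: "dist y a = infdist y X"
  shows "(y - a) /\<^sub>R infdist y X \<in> grad_limits (\<lambda>q. infdist q X) y"
proof -
  define ys where "ys = (\<lambda>i::nat. a + (1 - 1 / (real i + 2)) *\<^sub>R (y - a))"
  have "(\<lambda>i::nat. 1 - 1 / (real i + 2)) \<longlonglongrightarrow> 1 - 0"
    by (intro tendsto_intros) real_asymp
  then have "ys \<longlonglongrightarrow> a + 1 *\<^sub>R (y - a)" unfolding ys_def by (intro tendsto_intros) simp_all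
  then have ylim: "ys \<longlonglongrightarrow> y" by simp
  have hd: "\<forall>i. ((\<lambda>q. infdist q X) has_derivative (\<lambda>h. ((\<lambda>i. (y - a) /\<^sub>R infdist y X) i) \<bullet> h)) (at (ys i))"
    unfolding ys_def by (intro allI seg_deriv[OF cX aX dpos ya]) (auto simp: field_simps)
  have "ys \<longlonglongrightarrow> y \<and> (\<forall>i. ((\<lambda>q. infdist q X) has_derivative (\<lambda>h. ((\<lambda>i. (y - a) /\<^sub>R infdist y X) i) \<bullet> h)) (at (ys i)))
     \<and> (\<lambda>i. (y - a) /\<^sub>R infdist y X) \<longlonglongrightarrow> (y - a) /\<^sub>R infdist y X"
    using ylim hd by simp
  note H = this
  show ?thesis unfolding grad_limits_def mem_Collect_eq
    by (rule exI[where x=ys], rule exI[where x="\<lambda>i. (y - a) /\<^sub>R infdist y X"]) (use H in blast)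
qed


lemma dir_lemma:
  fixes X :: "'a::euclidean_space set"
  assumes cX: "compact X" and dpos: "infdist y X > 0"
    and DM: "Delta (clarke_grad (\<lambda>q. infdist q X) y) \<ge> mu"
    and e0: "0 < eps" and emu: "eps < mu" and mu1: "mu \<le> 1"
  shows "\<exists>w. norm w = 1 \<and> (\<exists>\<tau>>0. \<forall>t. 0 < t \<and> t < \<tau> \<longrightarrow>
            infdist (y + t *\<^sub>R w) X \<ge> infdist y X + (mu - eps) * t)"
proof -
  define d where "d = infdist y X"
  have d0: "d > 0" using dpos d_def by simp
  have clX: "closed X" using cX compact_imp_closed by auto
  have Xne: "X \<noteq> {}"
  proof
    assume "X = {}"
    then have "infdist y X = 0" by (simp add: infdist_def)
    then show False using dpos by simp
  qed
  define P where "P = {a\<in>X. dist y a = d}"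
  have Pne: "P \<noteq> {}"
  proof -
    obtain a where "a \<in> X" "infdist y X = dist y a" using infdist_attains_inf[OF clX Xne, of y] by blast
    then have "a \<in> P" unfolding P_def d_def by simp
    then show ?thesis by blast
  qed
  have Pc: "compact P"
  proof -
    have "P = X \<inter> {a. dist y a = d}" unfolding P_def by blast
    moreover have "closed {a. dist y a = d}"
      by (rule closed_Collect_eq) (rule continuous_on_dist continuous_on_const continuous_on_id)+
    ultimately show ?thesis using compact_Int_closed[OF cX] by simp
  qed
  define N where "N = (\<lambda>a. (y - a) /\<^sub>R d) ` P"
  have Nc: "compact N" unfolding N_def
    by (rule compact_continuous_image[OF _ Pc]) (rule continuous_on_scaleR continuous_on_diff continuous_on_const continuous_on_id)+
  have Ng: "N \<subseteq> grad_limits (\<lambda>q. infdist q X) y"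
  proof
    fix n assume "n \<in> N"
    then obtain a where a: "a \<in> X" "dist y a = d" "n = (y - a) /\<^sub>R d" unfolding N_def P_def by blast
    show "n \<in> grad_limits (\<lambda>q. infdist q X) y"
      using grad_in[OF clX a(1) dpos] a(2,3) unfolding d_def by simp
  qed
  define Hh where "Hh = convex hull N"
  have Hc: "compact Hh" unfolding Hh_def by (rule compact_convex_hull[OF Nc])
  have Hne: "Hh \<noteq> {}" using Pne by (simp add: Hh_def N_def)
  have Hcl: "Hh \<subseteq> clarke_grad (\<lambda>q. infdist q X) y"
    unfolding Hh_def clarke_grad_def by (rule hull_mono[OF Ng])
  obtain p0 where p0: "p0 \<in> Hh" "\<And>q. q \<in> Hh \<Longrightarrow> dist 0 p0 \<le> dist 0 q"
    using distance_attains_inf[OF compact_imp_closed[OF Hc] Hne, of 0] by blast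
  have np0: "norm p0 \<ge> mu"
  proof -
    have "Inf (norm ` clarke_grad (\<lambda>q. infdist q X) y) \<le> norm p0"
    proof (rule cInf_lower)
      show "norm p0 \<in> norm ` clarke_grad (\<lambda>q. infdist q X) y" using p0(1) Hcl by blast
      show "bdd_below (norm ` clarke_grad (\<lambda>q. infdist q X) y)" by (rule bdd_belowI[of _ 0]) auto
    qed
    then show ?thesis using DM unfolding Delta_def by linarith
  qed
  have p00: "norm p0 > 0" using np0 emu e0 by linarith
  define w where "w = p0 /\<^sub>R norm p0"
  have nw: "norm w = 1" using p00 by (simp add: w_def)
  have wn: "w \<bullet> n \<ge> mu" if "n \<in> N" for n
  proof -
    have nH: "n \<in> Hh" using hull_subset[of N convex] that unfolding Hh_def by blast
    have "inner (0 - p0) (n - p0) \<le> 0"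
      by (rule any_closest_point_dot[OF _ compact_imp_closed[OF Hc] p0(1) nH])
         (use p0(2) in \<open>simp_all add: Hh_def convex_convex_hull\<close>)
    then have "p0 \<bullet> n \<ge> p0 \<bullet> p0" by (simp add: inner_diff_right)
    then have "p0 \<bullet> n \<ge> norm p0 * norm p0" by (simp add: dot_square_norm power2_eq_square)
    then have "w \<bullet> n \<ge> norm p0" using p00 by (simp add: w_def field_simps)
    then show ?thesis using np0 by linarith
  qed
  have wP: "w \<bullet> (y - a) \<ge> mu * d" if "a \<in> P" for a
  proof -
    have "(y - a) /\<^sub>R d \<in> N" using that unfolding N_def by (rule imageI)
    then have "w \<bullet> ((y - a) /\<^sub>R d) \<ge> mu" by (rule wn)
    then have "mu \<le> (w \<bullet> (y - a)) / d" by (simp add: divide_inverse mult.commute)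
    then show ?thesis using d0 by (simp add: pos_le_divide_eq)
  qed
  define eta where "eta = eps * d"
  have eta0: "eta > 0" using e0 d0 by (simp add: eta_def)
  define K where "K = X \<inter> (\<Inter>a\<in>P. {a'. eta \<le> dist a' a})"
  have Kc: "compact K"
  proof -
    have "closed (\<Inter>a\<in>P. {a'. eta \<le> dist a' a})"
      by (intro closed_INT ballI closed_Collect_le) (rule continuous_on_dist continuous_on_const continuous_on_id)+
    then show ?thesis unfolding K_def using cX by (simp add: compact_Int_closed)
  qed
  obtain gam where gam0: "gam > 0" and gamK: "\<And>a'. a' \<in> K \<Longrightarrow> dist y a' \<ge> d + gam"
  proof (cases "K = {}")
    case True then show ?thesis using that[of 1] by auto
  next
    case False
    obtain k where k: "k \<in> K" "\<And>a'. a' \<in> K \<Longrightarrow> dist y k \<le> dist y a'"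
      using distance_attains_inf[OF compact_imp_closed[OF Kc] False, of y] by blast
    have kX: "k \<in> X" using k(1) K_def by auto
    have "dist y k \<ge> d" using infdist_le[OF kX, of y] d_def by simp
    moreover have "dist y k \<noteq> d"
    proof
      assume "dist y k = d"
      then have "k \<in> P" using kX P_def by auto
      then have "eta \<le> dist k k" using k(1) K_def by auto
      then show False using eta0 by simp
    qed
    ultimately have "dist y k > d" by simp
    then show ?thesis using that[of "dist y k - d"] k(2) by force
  qed
  show ?thesis
  proof (intro exI[of _ w] conjI nw exI[of _ "gam / 2"] allI impI)
    show "gam / 2 > 0" using gam0 by simp
    fix t :: real assume t: "0 < t \<and> t < gam / 2"
    obtain a' where a': "a' \<in> X" "infdist (y + t *\<^sub>R w) X = dist (y + t *\<^sub>R w) a'"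
      using infdist_attains_inf[OF clX Xne] by blast
    have ya': "dist y a' \<ge> d" using infdist_le[OF a'(1), of y] d_def by simp
    have "dist (y + t *\<^sub>R w) a' \<ge> d + (mu - eps) * t"
    proof (cases "a' \<in> K")
      case True
      have "dist y a' \<le> dist (y + t *\<^sub>R w) a' + dist y (y + t *\<^sub>R w)" using dist_triangle[of y a' "y + t *\<^sub>R w"] by linarith
      moreover have "dist y (y + t *\<^sub>R w) = t" using nw t by (simp add: dist_norm)
      moreover have "(mu - eps) * t \<le> t" using t emu mu1 e0 by (simp add: mult_left_le_one_le)
      ultimately show ?thesis using gamK[OF True] t by linarith
    next
      case False
      have "\<not> (\<forall>a\<in>P. eta \<le> dist a' a)" using False a'(1) unfolding K_def by blast
      then obtain a where aP: "a \<in> P" and aa: "dist a' a < eta" by (auto simp: not_le)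
      have "w \<bullet> (y - a') = w \<bullet> (y - a) + w \<bullet> (a - a')" by (simp add: inner_diff_right)
      moreover have "\<bar>w \<bullet> (a - a')\<bar> \<le> norm (a - a')"
        using Cauchy_Schwarz_ineq2[of w "a - a'"] nw by simp
      moreover have "norm (a - a') < eta" using aa by (simp add: dist_norm norm_minus_commute)
      moreover have "(mu - eps) * d = mu * d - eta" by (simp add: eta_def algebra_simps)
      ultimately have wya: "w \<bullet> (y - a') \<ge> (mu - eps) * d" using wP[OF aP] by linarith
      have "(dist (y + t *\<^sub>R w) a')^2 = (norm ((y - a') + t *\<^sub>R w))^2"
      proof -
        have "y + t *\<^sub>R w - a' = (y - a') + t *\<^sub>R w" by simp
        then show ?thesis by (simp only: dist_norm)
      qed
      also have "\<dots> = (norm (y - a'))^2 + 2 * t * (w \<bullet> (y - a')) + t^2"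
        using nsq[of "y - a'" "t *\<^sub>R w"] nw by (simp add: inner_commute)
      also have "\<dots> \<ge> d^2 + 2 * t * ((mu - eps) * d) + ((mu - eps) * t)^2"
      proof -
        have "(norm (y - a'))^2 \<ge> d^2" using ya' d0 by (simp add: dist_norm power_mono)
        moreover have "2 * t * (w \<bullet> (y - a')) \<ge> 2 * t * ((mu - eps) * d)" using wya t by simp
        moreover have "((mu - eps) * t)^2 \<le> t^2"
          using emu mu1 e0 t by (intro power_mono) (auto simp: mult_left_le_one_le)
        ultimately show ?thesis by linarith
      qed
      finally have fin: "d^2 + 2 * t * ((mu - eps) * d) + ((mu - eps) * t)^2 \<le> (dist (y + t *\<^sub>R w) a')^2" .
      have "(d + (mu - eps) * t)^2 = d^2 + 2 * t * ((mu - eps) * d) + ((mu - eps) * t)^2"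
        by (simp add: power2_eq_square algebra_simps)
      then have "(d + (mu - eps) * t)^2 \<le> (dist (y + t *\<^sub>R w) a')^2" using fin by linarith
      then show ?thesis by (rule power2_le_imp_le) simp
    qed
    then show "infdist (y + t *\<^sub>R w) X \<ge> infdist y X + (mu - eps) * t" using a' d_def by simp
  qed
qed

lemma push:
  fixes X :: "'a::euclidean_space set"
  assumes cX: "compact X" and mu0: "0 < mu" and mu1: "mu \<le> 1"
    and sH: "\<forall>y. 0 < infdist y X \<and> infdist y X \<le> s \<longrightarrow> Delta (clarke_grad (\<lambda>z. infdist z X) y) \<ge> mu"
    and y0: "infdist y0 X > 0" and R0: "R > 0" and Rs: "infdist y0 X + R \<le> s"
    and e0: "0 < eps" and emu: "eps < mu"
  shows "\<exists>y. dist y y0 = R \<and> infdist y X > (mu - eps) * R"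
proof -
  define Phi where "Phi = (\<lambda>q. infdist q X - (mu - eps) * dist q y0)"
  have cont: "continuous_on (cball y0 R) Phi" unfolding Phi_def
    by (intro continuous_on_diff continuous_on_mult continuous_on_const continuous_on_infdist
        continuous_on_dist continuous_on_id)
  obtain ys where ys: "ys \<in> cball y0 R" and ymax: "\<And>q. q \<in> cball y0 R \<Longrightarrow> Phi q \<le> Phi ys"
    using continuous_attains_sup[OF compact_cball _ cont] R0 by fastforce
  have "Phi y0 \<le> Phi ys" using ymax R0 by simp
  then have P0: "Phi ys \<ge> infdist y0 X" by (simp add: Phi_def)
  have dle: "dist ys y0 \<le> R" using ys by (simp add: dist_commute)
  have me: "mu - eps > 0" using emu by simp
  have ysd: "infdist ys X > (mu - eps) * dist ys y0" using P0 y0 unfolding Phi_def by linarith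
  have eqR: "dist ys y0 = R"
  proof (rule ccontr)
    assume "dist ys y0 \<noteq> R"
    then have lt: "dist ys y0 < R" using dle by simp
    have ypos: "infdist ys X > 0" using ysd me by (smt (verit) mult_nonneg_nonneg zero_le_dist)
    have "infdist ys X \<le> infdist y0 X + dist ys y0" by (rule infdist_triangle)
    then have yls: "infdist ys X \<le> s" using lt Rs by linarith
    have DM: "Delta (clarke_grad (\<lambda>z. infdist z X) ys) \<ge> mu" using sH ypos yls by blast
    obtain w tau where nw: "norm w = 1" and tau: "tau > 0" and
      wt: "\<And>t. 0 < t \<Longrightarrow> t < tau \<Longrightarrow> infdist (ys + t *\<^sub>R w) X \<ge> infdist ys X + (mu - eps/2) * t"
      using dir_lemma[OF cX ypos DM, of "eps/2"] e0 emu mu1 by auto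
    define t where "t = min (tau / 2) ((R - dist ys y0) / 2)"
    have t0: "t > 0" using tau lt by (simp add: t_def)
    have ttau: "t < tau" using tau by (simp add: t_def)
    have tle: "t \<le> (R - dist ys y0) / 2" unfolding t_def by (rule min.cobounded2)
    have tR: "dist ys y0 + t < R" using lt tle by argo
    define q where "q = ys + t *\<^sub>R w"
    have dq: "dist q y0 \<le> dist ys y0 + t"
    proof -
      have "dist q y0 \<le> dist q ys + dist ys y0" by (rule dist_triangle)
      moreover have "dist q ys = t" using nw t0 by (simp add: q_def dist_norm)
      ultimately show ?thesis by simp
    qed
    have qin: "q \<in> cball y0 R" using dq tR by (simp add: dist_commute)
    have i1: "infdist q X \<ge> infdist ys X + (mu - eps/2) * t" using wt[OF t0 ttau] by (simp add: q_def)
    have i2: "(mu - eps) * dist q y0 \<le> (mu - eps) * (dist ys y0 + t)"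
      using dq me by (intro mult_left_mono) auto
    have "Phi q \<ge> Phi ys + (eps/2) * t"
      using i1 i2 unfolding Phi_def by (simp add: algebra_simps)
    then have "Phi q > Phi ys" using t0 e0 by (smt (verit) mult_pos_pos half_gt_zero)
    then show False using ymax[OF qin] by simp
  qed
  show ?thesis using eqR ysd by (intro exI[of _ ys]) simp
qed

lemma tan_claim:
  fixes X :: "'a::euclidean_space set" and Y0 Y e :: "nat \<Rightarrow> 'a" and Rr :: "nat \<Rightarrow> real"
  assumes xX: "x \<in> X" and mu0: "0 < mu" and mu1: "mu \<le> 1" and B0: "B > 0"
    and Rpos: "\<And>n. Rr n > 0" and Rle: "\<And>n. Rr n \<le> B / (real n + 1)"
    and Y0x: "\<And>n. dist (Y0 n) x \<le> Rr n / (real n + 1)"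
    and YY0: "\<And>n. Y n - Y0 n = Rr n *\<^sub>R e n" and ne: "\<And>n. norm (e n) = 1"
    and Yd: "\<And>n. infdist (Y n) X > (mu - mu / (real n + 3)) * Rr n"
    and r: "strict_mono r" and lim: "(e \<circ> r) \<longlonglongrightarrow> u"
    and vu: "norm (v - u) \<le> mu" and v0: "v \<noteq> 0"
  shows "v /\<^sub>R norm v \<in> tan_dirs (ccompl X) x"
proof -
  define c where "c = (\<lambda>k. 1 - 2 / (real (r k) + 3))"
  define v' where "v' = (\<lambda>k. e (r k) + c k *\<^sub>R (v - u))"
  define p where "p = (\<lambda>k. Y0 (r k) + Rr (r k) *\<^sub>R v' k)"
  have c01: "0 \<le> c k \<and> c k \<le> 1" for k unfolding c_def by (auto simp: field_simps)
  have pY: "p k - Y (r k) = (Rr (r k) * c k) *\<^sub>R (v - u)" for k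
  proof -
    have "Y (r k) = Y0 (r k) + Rr (r k) *\<^sub>R e (r k)" using YY0[of "r k"] by (simp add: algebra_simps)
    then show ?thesis by (simp add: p_def v'_def algebra_simps)
  qed
  have pnX: "p k \<notin> X" for k
  proof
    assume pX: "p k \<in> X"
    define m where "m = r k"
    have Rm: "Rr m > 0" using Rpos by simp
    have "dist (Y m) (p k) = Rr m * c k * norm (v - u)"
      using pY[of k] Rm c01[of k] by (simp add: dist_norm norm_minus_commute m_def)
    also have "\<dots> \<le> Rr m * c k * mu" using vu Rm c01[of k] by (intro mult_left_mono) auto
    also have "\<dots> < (mu - mu / (real m + 3)) * Rr m"
    proof -
      have "c k * mu = mu - 2 * mu / (real m + 3)" unfolding c_def m_def by (simp add: field_simps)
      moreover have "mu / (real m + 3) > 0" using mu0 by simp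
      ultimately have "c k * mu < mu - mu / (real m + 3)" by (simp add: field_simps)
      then show ?thesis using Rm by (simp add: mult.commute mult.left_commute)
    qed
    also have "\<dots> < infdist (Y m) X" by (rule Yd)
    finally show False using infdist_le[OF pX, of "Y m"] by simp
  qed
  have pC: "p k \<in> ccompl X - {x}" for k
    using pnX[of k] xX closure_subset[of "UNIV - X"] unfolding ccompl_def by auto
  have nv': "norm (v' k) \<le> 2" for k
  proof -
    have "norm (v' k) \<le> norm (e (r k)) + norm (c k *\<^sub>R (v - u))" unfolding v'_def by (rule norm_triangle_ineq)
    moreover have "norm (c k *\<^sub>R (v - u)) \<le> 1"
    proof -
      have "norm (c k *\<^sub>R (v - u)) = c k * norm (v - u)" using c01[of k] by simp
      also have "\<dots> \<le> 1 * 1" using c01[of k] vu mu1 by (intro mult_mono) auto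
      finally show ?thesis by simp
    qed
    ultimately show ?thesis using ne by simp
  qed
  have sub: "k \<le> r k" for k using seq_suble[OF r] by simp
  have Rk: "Rr (r k) \<le> B / (real k + 1)" for k
  proof -
    have "Rr (r k) \<le> B / (real (r k) + 1)" by (rule Rle)
    also have "\<dots> \<le> B / (real k + 1)" using sub[of k] B0 by (intro divide_left_mono) auto
    finally show ?thesis .
  qed
  have plim: "p \<longlonglongrightarrow> x"
  proof -
    have bd: "norm (p k - x) \<le> 3 * B / (real k + 1)" for k
    proof -
      have eq: "p k - x = (Y0 (r k) - x) + Rr (r k) *\<^sub>R v' k" by (simp add: p_def)
      have "norm (p k - x) \<le> norm (Y0 (r k) - x) + norm (Rr (r k) *\<^sub>R v' k)"
        unfolding eq by (rule norm_triangle_ineq)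
      moreover have "norm (Y0 (r k) - x) \<le> Rr (r k)"
      proof -
        have "norm (Y0 (r k) - x) \<le> Rr (r k) / (real (r k) + 1)" using Y0x by (simp add: dist_norm)
        also have "\<dots> \<le> Rr (r k) / 1" using Rpos[of "r k"] by (intro divide_left_mono) auto
        finally show ?thesis by simp
      qed
      moreover have "norm (Rr (r k) *\<^sub>R v' k) \<le> Rr (r k) * 2"
        using nv'[of k] Rpos[of "r k"] by (simp add: mult_left_mono)
      ultimately have "norm (p k - x) \<le> 3 * Rr (r k)" by linarith
      also have "\<dots> \<le> 3 * (B / (real k + 1))" using Rk[of k] by simp
      finally show ?thesis by simp
    qed
    have "(\<lambda>k. 1 / (real k + 1)) \<longlonglongrightarrow> 0" by real_asymp
    then have "(\<lambda>k. (3 * B) * (1 / (real k + 1))) \<longlonglongrightarrow> 0" by (rule tendsto_mult_right_zero)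
    then have lim3: "(\<lambda>k. 3 * B / (real k + 1)) \<longlonglongrightarrow> 0" by simp
    have ev: "\<forall>k. norm (p k - x) \<le> 3 * B / (real k + 1)" using bd by blast
    have "(\<lambda>k. p k - x) \<longlonglongrightarrow> 0"
      by (rule Lim_null_comparison[OF always_eventually[OF ev] lim3])
    then show ?thesis by (simp add: LIM_zero_iff)
  qed
  define q where "q = (\<lambda>k. (Y0 (r k) - x) /\<^sub>R Rr (r k) + v' k)"
  have qlim: "q \<longlonglongrightarrow> v"
  proof -
    have a: "(\<lambda>k. (Y0 (r k) - x) /\<^sub>R Rr (r k)) \<longlonglongrightarrow> 0"
    proof -
      have ev: "\<forall>k. norm ((Y0 (r k) - x) /\<^sub>R Rr (r k)) \<le> 1 / (real k + 1)"
      proof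
        fix k
        have "norm ((Y0 (r k) - x) /\<^sub>R Rr (r k)) = \<bar>inverse (Rr (r k))\<bar> * norm (Y0 (r k) - x)"
          by (rule norm_scaleR)
        also have "\<dots> = norm (Y0 (r k) - x) / Rr (r k)"
          using Rpos[of "r k"] by (simp add: field_simps)
        also have "\<dots> \<le> (Rr (r k) / (real (r k) + 1)) / Rr (r k)"
          using Y0x[of "r k"] Rpos[of "r k"] by (intro divide_right_mono) (auto simp: dist_norm)
        also have "\<dots> = 1 / (real (r k) + 1)" using Rpos[of "r k"] by simp
        also have "\<dots> \<le> 1 / (real k + 1)" using sub[of k] by (intro divide_left_mono) auto
        finally show "norm ((Y0 (r k) - x) /\<^sub>R Rr (r k)) \<le> 1 / (real k + 1)" .
      qed
      have l1: "(\<lambda>k. 1 / (real k + 1)) \<longlonglongrightarrow> 0" by real_asymp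
      show ?thesis by (rule Lim_null_comparison[OF always_eventually[OF ev] l1])
    qed
    have clim: "c \<longlonglongrightarrow> 1"
    proof -
      have ev: "\<forall>k. norm (c k - 1) \<le> 2 / (real k + 1)"
      proof
        fix k
        have "norm (c k - 1) = 2 / (real (r k) + 3)" unfolding c_def by simp
        also have "\<dots> \<le> 2 / (real k + 1)" using sub[of k] by (intro divide_left_mono) auto
        finally show "norm (c k - 1) \<le> 2 / (real k + 1)" .
      qed
      have l2: "(\<lambda>k. 2 / (real k + 1)) \<longlonglongrightarrow> 0" by real_asymp
      have "(\<lambda>k. c k - 1) \<longlonglongrightarrow> 0" by (rule Lim_null_comparison[OF always_eventually[OF ev] l2])
      then show ?thesis by (simp add: LIM_zero_iff)
    qed
    have "v' \<longlonglongrightarrow> u + 1 *\<^sub>R (v - u)"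
      unfolding v'_def using lim clim by (intro tendsto_intros) (simp_all add: o_def)
    then have "v' \<longlonglongrightarrow> v" by simp
    from tendsto_add[OF a this] show ?thesis unfolding q_def by simp
  qed
  have pq: "p k - x = Rr (r k) *\<^sub>R q k" for k
    using Rpos[of "r k"] by (simp add: p_def q_def algebra_simps)
  have dirs: "(p k - x) /\<^sub>R norm (p k - x) = q k /\<^sub>R norm (q k)" for k
    using Rpos[of "r k"] by (simp add: pq)
  have "(\<lambda>k. q k /\<^sub>R norm (q k)) \<longlonglongrightarrow> v /\<^sub>R norm v"
    using qlim v0 by (intro tendsto_intros) auto
  then have "(\<lambda>k. (p k - x) /\<^sub>R norm (p k - x)) \<longlonglongrightarrow> v /\<^sub>R norm v" using dirs by simp
  then show ?thesis unfolding tan_dirs_def using pC plim by blast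
qed

theorem mainTheorem19:
  fixes X :: "'a::euclidean_space set" and mu :: real and x :: 'a
  assumes "0 < mu" and "mu \<le> 1"
    and "complementary_regular X"
    and "reach_mu mu X > 0"
    and "x \<in> frontier X"
  shows "\<exists>u. norm u = 1 \<and> cball u mu \<subseteq> Tan (ccompl X) x"
proof -
  note mu0 = assms(1) and mu1 = assms(2)
  have cX: "compact X" using assms(3) unfolding complementary_regular_def by blast
  have clX: "closed X" using cX by (rule compact_imp_closed)
  have xX: "x \<in> X" using assms(5) frontier_subset_closed[OF clX] by blast
  have xnint: "x \<notin> interior X" using assms(5) unfolding frontier_def by blast
  obtain s where s0: "s > 0" and
    sH: "\<forall>y. 0 < infdist y X \<and> infdist y X \<le> s \<longrightarrow> Delta (clarke_grad (\<lambda>z. infdist z X) y) \<ge> mu"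
  proof -
    from assms(4) obtain z where zin: "z \<in> ereal ` {s. \<forall>y. 0 < infdist y X \<and> infdist y X \<le> s \<longrightarrow>
      Delta (clarke_grad (\<lambda>z. infdist z X) y) \<ge> mu}" and z0: "0 < z"
      unfolding reach_mu_def less_Sup_iff by blast
    then obtain s where "z = ereal s" and "\<forall>y. 0 < infdist y X \<and> infdist y X \<le> s \<longrightarrow>
      Delta (clarke_grad (\<lambda>z. infdist z X) y) \<ge> mu" by blast
    moreover have "s > 0" using z0 \<open>z = ereal s\<close> by simp
    ultimately show ?thesis using that by blast
  qed
  define Rr where "Rr = (\<lambda>n::nat. s / (2 * (real n + 1)))"
  have Rpos: "Rr n > 0" for n using s0 by (simp add: Rr_def)
  have ex: "\<exists>y0 y. dist y0 x \<le> Rr n / (real n + 1) \<and> dist y y0 = Rr n \<and>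
              infdist y X > (mu - mu / (real n + 3)) * Rr n" for n
  proof -
    have "Rr n / (real n + 1) > 0" using Rpos[of n] by simp
    then have "\<not> ball x (Rr n / (real n + 1)) \<subseteq> X"
      using xnint unfolding mem_interior by blast
    then obtain y0 where y0b: "y0 \<in> ball x (Rr n / (real n + 1))" and y0X: "y0 \<notin> X" by blast
    have dy0: "dist y0 x \<le> Rr n / (real n + 1)" using y0b by (simp add: dist_commute)
    have Xne: "X \<noteq> {}" using xX by blast
    have ip: "infdist y0 X > 0" by (rule infdist_pos_not_in_closed[OF clX Xne y0X])
    have "infdist y0 X \<le> dist y0 x" using infdist_le[OF xX] by simp
    also have "\<dots> \<le> Rr n / (real n + 1)" by (rule dy0)
    also have "\<dots> \<le> Rr n / 1" using Rpos[of n] by (intro divide_left_mono) auto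
    finally have "infdist y0 X + Rr n \<le> 2 * Rr n" by simp
    also have "\<dots> \<le> s" using s0 by (simp add: Rr_def field_simps)
    finally have Rs: "infdist y0 X + Rr n \<le> s" .
    have e0: "0 < mu / (real n + 3)" using mu0 by simp
    have mn: "mu * real n \<ge> 0" using mu0 by simp
    have "mu / (real n + 3) < mu / 1" using mu0 by (intro divide_strict_left_mono) auto
    then have emu: "mu / (real n + 3) < mu" by simp
    obtain y where "dist y y0 = Rr n" "infdist y X > (mu - mu / (real n + 3)) * Rr n"
      using push[OF cX mu0 mu1 sH ip Rpos Rs e0 emu] by blast
    then show ?thesis using dy0 by blast
  qed
  obtain Y0 Y where YY: "\<And>n. dist (Y0 n) x \<le> Rr n / (real n + 1) \<and> dist (Y n) (Y0 n) = Rr n \<and>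
              infdist (Y n) X > (mu - mu / (real n + 3)) * Rr n"
    using ex by metis
  define e where "e = (\<lambda>n. (Y n - Y0 n) /\<^sub>R Rr n)"
  have YY0: "Y n - Y0 n = Rr n *\<^sub>R e n" for n using Rpos[of n] by (simp add: e_def)
  have ne: "norm (e n) = 1" for n
  proof -
    have "norm (e n) = \<bar>inverse (Rr n)\<bar> * norm (Y n - Y0 n)" unfolding e_def by (rule norm_scaleR)
    also have "\<dots> = norm (Y n - Y0 n) / Rr n" using Rpos[of n] by (simp add: field_simps)
    also have "\<dots> = 1" using YY[of n] Rpos[of n] by (simp add: dist_norm)
    finally show ?thesis .
  qed
  have "seq_compact (sphere (0::'a) 1)" by (rule compact_imp_seq_compact[OF compact_sphere])
  moreover have "\<forall>n. e n \<in> sphere 0 1" using ne by simp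
  ultimately obtain u r where u: "u \<in> sphere 0 1" and r: "strict_mono r" and lim: "(e \<circ> r) \<longlonglongrightarrow> u"
    by (rule seq_compactE)
  have nu: "norm u = 1" using u by simp
  have Rle: "Rr n \<le> (s / 2) / (real n + 1)" for n by (simp add: Rr_def field_simps)
  have B0: "s / 2 > 0" using s0 by simp
  have claim: "v /\<^sub>R norm v \<in> tan_dirs (ccompl X) x" if "norm (v - u) \<le> mu" "v \<noteq> 0" for v
    by (rule tan_claim[OF xX mu0 mu1 B0 Rpos Rle _ YY0 ne _ r lim that])
       (use YY in blast)+
  have "cball u mu \<subseteq> Tan (ccompl X) x"
  proof
    fix v assume "v \<in> cball u mu"
    then have vu: "norm (v - u) \<le> mu" by (simp add: dist_norm norm_minus_commute)
    show "v \<in> Tan (ccompl X) x"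
    proof (cases "v = 0")
      case True
      have u0: "u \<noteq> 0" using nu by auto
      have "u /\<^sub>R norm u \<in> tan_dirs (ccompl X) x" using claim[of u] mu0 u0 by simp
      then have "u \<in> tan_dirs (ccompl X) x" using nu by simp
      then show ?thesis unfolding Tan_def using True by force
    next
      case False
      have eqv: "v = norm v *\<^sub>R (v /\<^sub>R norm v)" using False by simp
      have "0 \<le> norm v \<and> v /\<^sub>R norm v \<in> tan_dirs (ccompl X) x" using claim[OF vu False] by simp
      then show ?thesis unfolding Tan_def mem_Collect_eq
        by (intro exI[where x="norm v"] exI[where x="v /\<^sub>R norm v"]) (use eqv in simp)
    qed
  qed
  then show ?thesis using nu by blast
qed

end
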